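(* Let $T$ be a locally finite, infinite tree with root $o$ such that every vertex has forward degree at least $2$. Let $d$ be an ultrametric on $\partial T$ whose closed balls (of positive radius) are exactly the sets $\partial T_x$, $x \in T$. Then there is an ultrametric element $\phi$ on $T$ such that $d = d_{\phi}$.
   Context: $T$ is identified with its vertex set. For $x \neq o$, $x^-$ denotes the neighbour of $x$ on the geodesic from $o$ to $x$; the forward degree of $x$ is $\deg^+(x) = |\{y \in T : y^- = x\}|$. A ray is a one-sided infinite path of distinct successive neighbours; two rays are equivalent if their symmetric difference is finite; an end is an equivalence class of rays, and $\partial T$ is the set of ends. For $\xi\in\partial T$, $\pi(o,\xi)$ is the unique ray from $o$ representing $\xi$. For $x \in T$, $T_x = \{y \in T : x \text{ lies on the geodesic from } o \text{ to } y\}$ and $\partial T_x$ is the set of ends having a representative ray inside $T_x$. For distinct $\xi,\eta \in \partial T$, the confluent $\xi \wedge \eta$ is the last common vertex of the rays $\pi(o,\xi)$ and $\pi(o,\eta)$. An ultrametric element is a function $\phi : T \to (0,\infty)$ with (i) $\phi(x^-) > \phi(x)$ for every $x \neq o$ and (ii) $\phi(x_n) \to 0$ along every geodesic ray $[x_0,x_1,x_2,\dots]$. It induces the ultrametric $d_\phi$ on $\partial T$ given by $d_\phi(\xi,\xi)=0$ and $d_\phi(\xi,\eta) = \phi(\xi\wedge\eta)$ for $\xi \neq \eta$. *)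

theory Defs
  imports "HOL-Analysis.Analysis"
begin

text \<open>A rooted tree is given by a vertex set V, a root r and the parent map p
(p x is the vertex x^- for x \<noteq> r).  Every vertex reaches the root by finitely many parent steps,
which makes the graph a tree rooted at r.\<close>

definition rooted_tree :: "'v set \<Rightarrow> 'v \<Rightarrow> ('v \<Rightarrow> 'v) \<Rightarrow> bool" where
  "rooted_tree V r p \<longleftrightarrow> r \<in> V \<and> (\<forall>x\<in>V. x \<noteq> r \<longrightarrow> p x \<in> V)
     \<and> (\<forall>x\<in>V. \<exists>n. (p ^^ n) x = r)"

definition adj :: "'v set \<Rightarrow> 'v \<Rightarrow> ('v \<Rightarrow> 'v) \<Rightarrow> 'v \<Rightarrow> 'v \<Rightarrow> bool" where
  "adj V r p x y \<longleftrightarrow> x \<in> V \<and> y \<in> V \<and> ((x \<noteq> r \<and> p x = y) \<or> (y \<noteq> r \<and> p y = x))"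

definition children :: "'v set \<Rightarrow> 'v \<Rightarrow> ('v \<Rightarrow> 'v) \<Rightarrow> 'v \<Rightarrow> 'v set" where
  "children V r p x = {y \<in> V. y \<noteq> r \<and> p y = x}"

definition locally_finite :: "'v set \<Rightarrow> 'v \<Rightarrow> ('v \<Rightarrow> 'v) \<Rightarrow> bool" where
  "locally_finite V r p \<longleftrightarrow> (\<forall>x\<in>V. finite {y. adj V r p x y})"

definition fdeg :: "'v set \<Rightarrow> 'v \<Rightarrow> ('v \<Rightarrow> 'v) \<Rightarrow> 'v \<Rightarrow> nat" where
  "fdeg V r p x = card (children V r p x)"

definition ray :: "'v set \<Rightarrow> 'v \<Rightarrow> ('v \<Rightarrow> 'v) \<Rightarrow> (nat \<Rightarrow> 'v) \<Rightarrow> bool" where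
  "ray V r p f \<longleftrightarrow> inj f \<and> (\<forall>n. adj V r p (f n) (f (Suc n)))"

definition ray_equiv :: "(nat \<Rightarrow> 'v) \<Rightarrow> (nat \<Rightarrow> 'v) \<Rightarrow> bool" where
  "ray_equiv f g \<longleftrightarrow> finite ((range f - range g) \<union> (range g - range f))"

definition ends :: "'v set \<Rightarrow> 'v \<Rightarrow> ('v \<Rightarrow> 'v) \<Rightarrow> (nat \<Rightarrow> 'v) set set" where
  "ends V r p = {{g. ray V r p g \<and> ray_equiv f g} | f. ray V r p f}"

definition subtree :: "'v set \<Rightarrow> 'v \<Rightarrow> ('v \<Rightarrow> 'v) \<Rightarrow> 'v \<Rightarrow> 'v set" where
  "subtree V r p x = {y \<in> V. \<exists>n. (p ^^ n) y = x \<and> (\<forall>k<n. (p ^^ k) y \<noteq> r)}"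

definition boundary_sub :: "'v set \<Rightarrow> 'v \<Rightarrow> ('v \<Rightarrow> 'v) \<Rightarrow> 'v \<Rightarrow> (nat \<Rightarrow> 'v) set set" where
  "boundary_sub V r p x = {\<xi> \<in> ends V r p. \<exists>f\<in>\<xi>. range f \<subseteq> subtree V r p x}"

definition ray_from_root :: "'v \<Rightarrow> (nat \<Rightarrow> 'v) set \<Rightarrow> (nat \<Rightarrow> 'v)" where
  "ray_from_root r \<xi> = (THE f. f \<in> \<xi> \<and> f 0 = r)"

definition confluent :: "'v \<Rightarrow> (nat \<Rightarrow> 'v) set \<Rightarrow> (nat \<Rightarrow> 'v) set \<Rightarrow> 'v" where
  "confluent r \<xi> \<eta> = (let f = ray_from_root r \<xi>; g = ray_from_root r \<eta>
                       in f (GREATEST n. f n \<in> range g))"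

definition ultrametric_element :: "'v set \<Rightarrow> 'v \<Rightarrow> ('v \<Rightarrow> 'v) \<Rightarrow> ('v \<Rightarrow> real) \<Rightarrow> bool" where
  "ultrametric_element V r p \<phi> \<longleftrightarrow> (\<forall>x\<in>V. \<phi> x > 0)
     \<and> (\<forall>x\<in>V. x \<noteq> r \<longrightarrow> \<phi> (p x) > \<phi> x)
     \<and> (\<forall>f. ray V r p f \<longrightarrow> (\<lambda>n. \<phi> (f n)) \<longlonglongrightarrow> 0)"

definition d_phi :: "'v \<Rightarrow> ('v \<Rightarrow> real) \<Rightarrow> (nat \<Rightarrow> 'v) set \<Rightarrow> (nat \<Rightarrow> 'v) set \<Rightarrow> real" where
  "d_phi r \<phi> \<xi> \<eta> = (if \<xi> = \<eta> then 0 else \<phi> (confluent r \<xi> \<eta>))"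

definition is_ultrametric :: "'a set \<Rightarrow> ('a \<Rightarrow> 'a \<Rightarrow> real) \<Rightarrow> bool" where
  "is_ultrametric S d \<longleftrightarrow>
     (\<forall>x\<in>S. \<forall>y\<in>S. d x y = 0 \<longleftrightarrow> x = y)
   \<and> (\<forall>x\<in>S. \<forall>y\<in>S. d x y \<ge> 0)
   \<and> (\<forall>x\<in>S. \<forall>y\<in>S. d x y = d y x)
   \<and> (\<forall>x\<in>S. \<forall>y\<in>S. \<forall>z\<in>S. d x z \<le> max (d x y) (d y z))"

definition closed_ball_in :: "'a set \<Rightarrow> ('a \<Rightarrow> 'a \<Rightarrow> real) \<Rightarrow> 'a \<Rightarrow> real \<Rightarrow> 'a set" where
  "closed_ball_in S d x \<rho> = {y \<in> S. d x y \<le> \<rho>}"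

end

theory Submission
  imports Defs
begin

lemma ray_equiv_refl: "ray_equiv f f" unfolding ray_equiv_def by simp
lemma ray_equiv_sym: "ray_equiv f g \<Longrightarrow> ray_equiv g f" unfolding ray_equiv_def by (simp add: Un_commute)
lemma ray_equiv_trans: "ray_equiv f g \<Longrightarrow> ray_equiv g h \<Longrightarrow> ray_equiv f h"
  unfolding ray_equiv_def
  by (rule finite_subset[of _ "(range f - range g) \<union> (range g - range f) \<union> ((range g - range h) \<union> (range h - range g))"]) auto

locale tr =
  fixes V :: "'v set" and r :: 'v and p :: "'v \<Rightarrow> 'v"
  assumes tree: "rooted_tree V r p"
    and deg: "\<forall>x\<in>V. fdeg V r p x \<ge> 2"
begin

definition "Br = {g. g 0 = r \<and> (\<forall>n. g (Suc n) \<in> V \<and> g (Suc n) \<noteq> r \<and> p (g (Suc n)) = g n)}"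
definition "E g = {h. ray V r p h \<and> ray_equiv g h}"

lemma rV: "r \<in> V" using tree unfolding rooted_tree_def by blast
lemma pV: "x \<in> V \<Longrightarrow> x \<noteq> r \<Longrightarrow> p x \<in> V" using tree unfolding rooted_tree_def by blast
lemma reach: "x \<in> V \<Longrightarrow> \<exists>n. (p^^n) x = r" using tree unfolding rooted_tree_def by blast

lemma Br_V: "g \<in> Br \<Longrightarrow> g n \<in> V"
  by (cases n) (auto simp: Br_def rV)
lemma Br_nr: "g \<in> Br \<Longrightarrow> g (Suc n) \<noteq> r" by (auto simp: Br_def)
lemma Br_p: "g \<in> Br \<Longrightarrow> p (g (Suc n)) = g n" by (auto simp: Br_def)
lemma Br_0: "g \<in> Br \<Longrightarrow> g 0 = r" by (auto simp: Br_def)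

lemma Br_iter: "g \<in> Br \<Longrightarrow> k \<le> n \<Longrightarrow> (p^^k) (g n) = g (n-k)"
proof (induction k)
  case 0 then show ?case by simp
next
  case (Suc k)
  then have "(p^^k) (g n) = g (Suc (n - Suc k))" by (simp add: Suc_diff_Suc)
  then show ?case using Suc Br_p by simp
qed

lemma Br_eq_idx: assumes g: "g \<in> Br" and h: "h \<in> Br" and e: "g n = h m" shows "n = m"
proof (rule ccontr)
  assume "n \<noteq> m"
  then consider "n < m" | "m < n" by linarith
  then show False
  proof cases
    case 1
    have "(p^^n) (g n) = r" using Br_iter[OF g, of n n] Br_0[OF g] by simp
    moreover have "m - n = Suc (m - n - 1)" using 1 by simp
    moreover have "(p^^n) (h m) = h (m - n)" using Br_iter[OF h, of n m] 1 by simp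
    ultimately show False using e Br_nr[OF h] by metis
  next
    case 2
    have "(p^^m) (h m) = r" using Br_iter[OF h, of m m] Br_0[OF h] by simp
    moreover have "n - m = Suc (n - m - 1)" using 2 by simp
    moreover have "(p^^m) (g n) = g (n - m)" using Br_iter[OF g, of m n] 2 by simp
    ultimately show False using e Br_nr[OF g] by metis
  qed
qed

lemma Br_anc: assumes g: "g \<in> Br" and h: "h \<in> Br" and e: "g n = h m" and k: "k \<le> n"
  shows "g k = h k"
proof -
  have nm: "n = m" using Br_eq_idx[OF g h e] .
  have "g k = (p^^(n-k)) (g n)" using Br_iter[OF g, of "n-k" n] k by simp
  also have "\<dots> = (p^^(n-k)) (h n)" using e nm by simp
  also have "\<dots> = h k" using Br_iter[OF h, of "n-k" n] k by simp
  finally show ?thesis .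
qed

lemma Br_inj: "g \<in> Br \<Longrightarrow> inj g"
  unfolding inj_def using Br_eq_idx by blast

lemma Br_ray: "g \<in> Br \<Longrightarrow> ray V r p g"
  unfolding ray_def adj_def using Br_inj Br_V Br_nr Br_p by blast

lemma ray_V: "ray V r p f \<Longrightarrow> f n \<in> V"
  unfolding ray_def adj_def by blast

lemma ray_step: "ray V r p f \<Longrightarrow> (f n \<noteq> r \<and> p (f n) = f (Suc n)) \<or> (f (Suc n) \<noteq> r \<and> p (f (Suc n)) = f n)"
  unfolding ray_def adj_def by blast

lemma ray_down_Suc: assumes f: "ray V r p f" and d: "f (Suc n) \<noteq> r \<and> p (f (Suc n)) = f n"
  shows "f (Suc (Suc n)) \<noteq> r \<and> p (f (Suc (Suc n))) = f (Suc n)"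
proof -
  have inj: "inj f" using f unfolding ray_def by blast
  have "\<not> (p (f (Suc n)) = f (Suc (Suc n)))"
  proof
    assume "p (f (Suc n)) = f (Suc (Suc n))"
    then have "f n = f (Suc (Suc n))" using d by simp
    then show False using inj unfolding inj_def by fastforce
  qed
  then show ?thesis using ray_step[OF f, of "Suc n"] by blast
qed

lemma ray_down_ge: assumes f: "ray V r p f" and d: "f (Suc a) \<noteq> r \<and> p (f (Suc a)) = f a"
  and n: "a \<le> n" shows "f (Suc n) \<noteq> r \<and> p (f (Suc n)) = f n"
  using n
proof (induction n rule: dec_induct)
  case base then show ?case using d .
next
  case (step n) then show ?case using ray_down_Suc[OF f] by blast
qed

lemma ray_some_down: assumes f: "ray V r p f" shows "\<exists>a. f (Suc a) \<noteq> r \<and> p (f (Suc a)) = f a"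
proof (rule ccontr)
  assume "\<not> ?thesis"
  then have up: "\<And>n. f n \<noteq> r \<and> p (f n) = f (Suc n)" using ray_step[OF f] by blast
  have up2: "f (Suc n) = p (f n)" for n using up by metis
  have it: "f n = (p^^n) (f 0)" for n
    by (induction n) (simp_all add: up2)
  obtain N where "(p^^N) (f 0) = r" using reach ray_V[OF f] by blast
  then show False using it up by metis
qed

lemma ray_from_r: assumes f: "ray V r p f" and f0: "f 0 = r" shows "f \<in> Br"
proof -
  have d0: "f (Suc 0) \<noteq> r \<and> p (f (Suc 0)) = f 0" using ray_step[OF f, of 0] f0 by blast
  have "\<forall>n. f (Suc n) \<in> V \<and> f (Suc n) \<noteq> r \<and> p (f (Suc n)) = f n"
    using ray_down_ge[OF f d0] ray_V[OF f] by simp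
  then show ?thesis unfolding Br_def using f0 by blast
qed

lemma extend:
  assumes x: "x \<in> V" and s0: "s 0 = x"
    and ss: "\<And>j. s (Suc j) \<in> V \<and> s (Suc j) \<noteq> r \<and> p (s (Suc j)) = s j"
  shows "\<exists>g\<in>Br. \<exists>D. \<forall>j. g (D + j) = s j"
proof -
  have ex: "\<exists>n. (p^^n) x = r" using reach x by blast
  define D where "D = (LEAST n. (p^^n) x = r)"
  have hD: "(p^^D) x = r" unfolding D_def using ex by (rule LeastI_ex)
  have lt: "k < D \<Longrightarrow> (p^^k) x \<noteq> r" for k unfolding D_def using not_less_Least by blast
  have inV: "k \<le> D \<Longrightarrow> (p^^k) x \<in> V" for k
  proof (induction k)
    case 0 then show ?case using x by simp
  next
    case (Suc k) then have "(p^^k) x \<in> V" "(p^^k) x \<noteq> r" using lt by auto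
    then show ?case using pV by simp
  qed
  define g where "g n = (if n \<le> D then (p^^(D-n)) x else s (n-D))" for n
  have g0: "g 0 = r" using hD by (simp add: g_def)
  have "\<forall>n. g (Suc n) \<in> V \<and> g (Suc n) \<noteq> r \<and> p (g (Suc n)) = g n"
  proof
    fix n
    show "g (Suc n) \<in> V \<and> g (Suc n) \<noteq> r \<and> p (g (Suc n)) = g n"
    proof (cases "Suc n \<le> D")
      case True
      have e: "D - n = Suc (D - Suc n)" using True by simp
      show ?thesis using True inV[of "D - Suc n"] lt[of "D - Suc n"] e by (simp add: g_def)
    next
      case False
      have gn: "g n = s (n - D)" using False s0 by (auto simp: g_def)
      have "Suc n - D = Suc (n - D)" using False by simp
      then show ?thesis using False ss[of "n-D"] gn by (simp add: g_def)
    qed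
  qed
  then have "g \<in> Br" using g0 unfolding Br_def by blast
  moreover have "\<forall>j. g (D + j) = s j" using s0 by (auto simp: g_def)
  ultimately show ?thesis by blast
qed

lemma ray_to_Br: assumes f: "ray V r p f"
  shows "\<exists>g\<in>Br. ray_equiv f g \<and> (\<exists>a D. \<forall>j. f (a+j) = g (D+j))"
proof -
  obtain a where da: "f (Suc a) \<noteq> r \<and> p (f (Suc a)) = f a" using ray_some_down[OF f] by blast
  define s where "s j = f (a+j)" for j
  have ss: "s (Suc j) \<in> V \<and> s (Suc j) \<noteq> r \<and> p (s (Suc j)) = s j" for j
    using ray_down_ge[OF f da, of "a+j"] ray_V[OF f] by (simp add: s_def)
  obtain g D where g: "g \<in> Br" and gD: "\<forall>j. g (D + j) = s j"
    using extend[of "f a" s] ray_V[OF f] ss by (auto simp: s_def)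
  have "range f - range g \<subseteq> f ` {..<a}"
  proof
    fix y assume y: "y \<in> range f - range g"
    then obtain n where n: "y = f n" by blast
    have "\<not> a \<le> n"
    proof
      assume "a \<le> n"
      then have "f n = g (D + (n - a))" using gD s_def by (metis le_add_diff_inverse)
      then show False using y n by (metis DiffD2 rangeI)
    qed
    then show "y \<in> f ` {..<a}" using n by auto
  qed
  moreover have "range g - range f \<subseteq> g ` {..<D}"
  proof
    fix y assume y: "y \<in> range g - range f"
    then obtain n where n: "y = g n" by blast
    have "\<not> D \<le> n"
    proof
      assume "D \<le> n"
      then have "g n = f (a + (n - D))" using gD[rule_format, of "n-D"] by (simp add: s_def)
      then show False using y n by (metis DiffD2 rangeI)
    qed
    then show "y \<in> g ` {..<D}" using n by auto
  qed
  ultimately have "ray_equiv f g" unfolding ray_equiv_def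
    by (meson finite_Un finite_imageI finite_lessThan finite_subset)
  moreover have "\<forall>j. f (a+j) = g (D+j)" using gD by (simp add: s_def)
  ultimately show ?thesis using g by blast
qed

lemma Br_unique: assumes g: "g \<in> Br" and h: "h \<in> Br" and e: "ray_equiv g h" shows "g = h"
proof (rule ccontr)
  assume "g \<noteq> h"
  then obtain j where j: "g j \<noteq> h j" by blast
  have "g ` {j..} \<subseteq> range g - range h"
  proof
    fix y assume "y \<in> g ` {j..}"
    then obtain n where n: "n \<ge> j" "y = g n" by auto
    have "y \<notin> range h"
    proof
      assume "y \<in> range h"
      then obtain m where "g n = h m" using n by auto
      then have "g j = h j" using Br_anc[OF g h] n by blast
      then show False using j by simp
    qed
    then show "y \<in> range g - range h" using n by auto
  qed
  then have "finite (g ` {j..})" using e unfolding ray_equiv_def by (meson finite_Un finite_subset)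
  moreover have "inj_on g {j..}" using Br_inj[OF g] by (simp add: inj_on_def inj_def)
  ultimately have "finite ({j..} :: nat set)" using finite_imageD by blast
  then show False using infinite_Ici by blast
qed

lemma ends_eq: "ends V r p = E ` Br"
proof
  show "ends V r p \<subseteq> E ` Br"
  proof
    fix \<xi> assume "\<xi> \<in> ends V r p"
    then obtain f where f: "ray V r p f" and xi: "\<xi> = {g. ray V r p g \<and> ray_equiv f g}"
      unfolding ends_def by blast
    obtain g where g: "g \<in> Br" "ray_equiv f g" using ray_to_Br[OF f] by blast
    have "\<xi> = E g" unfolding xi E_def
      using g(2) ray_equiv_sym ray_equiv_trans by blast
    then show "\<xi> \<in> E ` Br" using g by blast
  qed
next
  show "E ` Br \<subseteq> ends V r p"
    unfolding ends_def E_def using Br_ray by blast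
qed

lemma E_self: "g \<in> Br \<Longrightarrow> g \<in> E g" unfolding E_def using Br_ray ray_equiv_refl by blast

lemma E_inj: "g \<in> Br \<Longrightarrow> h \<in> Br \<Longrightarrow> E g = E h \<Longrightarrow> g = h"
  using E_self Br_unique unfolding E_def by blast

lemma rfr: assumes g: "g \<in> Br" shows "ray_from_root r (E g) = g"
  unfolding ray_from_root_def
proof (rule the_equality)
  show "g \<in> E g \<and> g 0 = r" using E_self[OF g] Br_0[OF g] by blast
next
  fix f assume "f \<in> E g \<and> f 0 = r"
  then have "f \<in> Br" "ray_equiv g f" using ray_from_r unfolding E_def by blast+
  then show "f = g" using Br_unique[OF g] by metis
qed

lemma bsub: assumes g: "g \<in> Br" shows "E g \<in> boundary_sub V r p x \<longleftrightarrow> x \<in> range g"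
proof
  assume "E g \<in> boundary_sub V r p x"
  then obtain h where h: "h \<in> E g" and hs: "range h \<subseteq> subtree V r p x"
    unfolding boundary_sub_def by blast
  have eq: "ray_equiv g h" using h unfolding E_def by blast
  have "range g \<inter> range h \<noteq> {}"
  proof
    assume "range g \<inter> range h = {}"
    then have "range g \<subseteq> range g - range h" by blast
    then have "finite (range g)" using eq unfolding ray_equiv_def by (meson finite_Un finite_subset)
    then show False using Br_inj[OF g] finite_imageD by (metis infinite_UNIV_nat inj_on_subset subset_UNIV)
  qed
  then obtain m where m: "g m \<in> range h" by blast
  then have "g m \<in> subtree V r p x" using hs by blast
  then obtain j where j: "(p^^j) (g m) = x" "\<forall>k<j. (p^^k) (g m) \<noteq> r"
    unfolding subtree_def by blast
  show "x \<in> range g"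
  proof (cases "j \<le> m")
    case True then show ?thesis using j Br_iter[OF g] by (metis rangeI)
  next
    case False
    then have "(p^^m) (g m) \<noteq> r" using j by simp
    then show ?thesis using Br_iter[OF g, of m m] Br_0[OF g] by simp
  qed
next
  assume "x \<in> range g"
  then obtain n where n: "x = g n" by blast
  define h where "h j = g (n + j)" for j
  have hB: "h \<in> E g"
  proof -
    have i: "inj h" using Br_inj[OF g] unfolding h_def inj_def by (metis add_left_cancel)
    have a: "\<forall>j. adj V r p (h j) (h (Suc j))"
      using Br_ray[OF g] unfolding ray_def h_def by simp
    have s1: "range g - range h \<subseteq> g ` {..<n}"
    proof
      fix y assume y: "y \<in> range g - range h"
      then obtain k where k: "y = g k" by blast
      have "\<not> n \<le> k"
      proof
        assume "n \<le> k" then have "g k = h (k - n)" unfolding h_def by simp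
        then show False using y k by (metis DiffD2 rangeI)
      qed
      then show "y \<in> g ` {..<n}" using k by auto
    qed
    have s2: "range h - range g = {}" unfolding h_def by auto
    have "finite (range g - range h)" by (rule finite_subset[OF s1]) simp
    then have "finite ((range g - range h) \<union> (range h - range g))"
      using s2 by (metis Un_empty_right)
    then show ?thesis unfolding E_def ray_def ray_equiv_def using i a by blast
  qed
  have "range h \<subseteq> subtree V r p x"
  proof
    fix y assume "y \<in> range h"
    then obtain j where j: "y = g (n + j)" unfolding h_def by blast
    have "(p^^j) y = x" using Br_iter[OF g, of j "n+j"] j n by simp
    moreover have "\<forall>k<j. (p^^k) y \<noteq> r"
    proof (intro allI impI)
      fix k assume "k < j"
      then have e: "n + j - k = Suc (n + j - k - 1)" by simp
      have "(p^^k) y = g (n + j - k)" using Br_iter[OF g, of k "n+j"] j \<open>k < j\<close> by simp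
      then have "(p^^k) y = g (Suc (n + j - k - 1))" using e by metis
      then show "(p^^k) y \<noteq> r" using Br_nr[OF g] by metis
    qed
    ultimately show "y \<in> subtree V r p x" unfolding subtree_def using Br_V[OF g] j by blast
  qed
  moreover have "E g \<in> ends V r p" using ends_eq g by blast
  ultimately show "E g \<in> boundary_sub V r p x" unfolding boundary_sub_def using hB by blast
qed


lemma two_elems: assumes "2 \<le> card (A::'a set)" shows "\<exists>a b. a\<in>A \<and> b\<in>A \<and> a\<noteq>b"
proof -
  have "0 < card A" using assms by simp
  then have fin: "finite A" and ne: "A \<noteq> {}" using card_gt_0_iff by blast+
  then obtain a where a: "a \<in> A" by blast
  have "card (A - {a}) = card A - 1" using a fin by simp
  then have "card (A - {a}) \<noteq> 0" using assms by simp
  then have "A - {a} \<noteq> {}" by (metis card.empty)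
  then obtain b where "b \<in> A - {a}" by blast
  then show ?thesis using a by blast
qed

lemma two_children: "y \<in> V \<Longrightarrow> \<exists>z1 z2. z1 \<in> children V r p y \<and> z2 \<in> children V r p y \<and> z1 \<noteq> z2"
  using deg two_elems unfolding fdeg_def by blast

lemma Br_parent: assumes g: "g \<in> Br" and z: "g m = z" "z \<noteq> r"
  shows "m = Suc (m - 1) \<and> g (m - 1) = p z"
proof -
  have "m \<noteq> 0"
  proof
    assume "m = 0" then show False using z Br_0[OF g] by simp
  qed
  then have "m = Suc (m - 1)" by simp
  then show ?thesis using Br_p[OF g, of "m-1"] z by metis
qed

lemma branch_through: assumes y: "y \<in> V" shows "\<exists>g\<in>Br. y \<in> range g"
proof -
  define c where "c z = (SOME w. w \<in> children V r p z)" for z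
  have c: "z \<in> V \<Longrightarrow> c z \<in> children V r p z" for z
    unfolding c_def using two_children by (meson someI_ex)
  define s where "s j = (c^^j) y" for j
  have sV: "s j \<in> V" for j
    by (induction j) (use y c in \<open>auto simp: s_def children_def\<close>)
  have ss: "s (Suc j) \<in> V \<and> s (Suc j) \<noteq> r \<and> p (s (Suc j)) = s j" for j
    using c[OF sV[of j]] unfolding s_def children_def by simp
  obtain g D where "g \<in> Br" "\<forall>j. g (D + j) = s j" using extend[of y s, OF y _ ss] by (auto simp: s_def)
  then show ?thesis by (metis add_0_right rangeI funpow_0 s_def)
qed

lemma confl: assumes g: "g \<in> Br" and h: "h \<in> Br" and ne: "g \<noteq> h"
  shows "\<exists>m. confluent r (E g) (E h) = g m \<and> g m = h m \<and> (\<forall>k. g k = h k \<longrightarrow> k \<le> m)"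
proof -
  obtain j where j: "g j \<noteq> h j" using ne by blast
  define P where "P n = (g n \<in> range h)" for n
  have Pb: "P n \<Longrightarrow> n \<le> j" for n
  proof (rule ccontr)
    assume "P n" "\<not> n \<le> j"
    then obtain k where "g n = h k" unfolding P_def by blast
    then have "g j = h j" using Br_anc[OF g h] \<open>\<not> n \<le> j\<close> by simp
    then show False using j by simp
  qed
  have P0: "P 0" unfolding P_def using Br_0[OF g] Br_0[OF h] by (metis rangeI)
  define m where "m = Greatest P"
  have Pm: "P m" unfolding m_def using GreatestI_nat[of P 0 j] P0 Pb by blast
  have mx: "P k \<Longrightarrow> k \<le> m" for k unfolding m_def using Greatest_le_nat[of P k j] Pb by blast
  have gm: "g m = h m" using Pm Br_eq_idx[OF g h] unfolding P_def by (metis rangeE)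
  have "confluent r (E g) (E h) = g m"
    unfolding confluent_def rfr[OF g] rfr[OF h] Let_def m_def P_def by simp
  moreover have "\<forall>k. g k = h k \<longrightarrow> k \<le> m" using mx unfolding P_def by (metis rangeI)
  ultimately show ?thesis using gm by blast
qed

end

locale tm = tr +
  fixes d :: "(nat \<Rightarrow> 'a) set \<Rightarrow> (nat \<Rightarrow> 'a) set \<Rightarrow> real"
  assumes um: "is_ultrametric (ends V r p) d"
    and balls: "{closed_ball_in (ends V r p) d \<xi> \<rho> | \<xi> \<rho>. \<xi> \<in> ends V r p \<and> \<rho> > 0}
                = {boundary_sub V r p x | x. x \<in> V}"
begin

abbreviation "S \<equiv> ends V r p"
abbreviation "bs x \<equiv> boundary_sub V r p x"
definition "diam A = Sup {d a b | a b. a \<in> A \<and> b \<in> A}"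

lemma d0: "a \<in> S \<Longrightarrow> b \<in> S \<Longrightarrow> d a b = 0 \<longleftrightarrow> a = b" using um unfolding is_ultrametric_def by blast
lemma dge: "a \<in> S \<Longrightarrow> b \<in> S \<Longrightarrow> d a b \<ge> 0" using um unfolding is_ultrametric_def by blast
lemma dsym: "a \<in> S \<Longrightarrow> b \<in> S \<Longrightarrow> d a b = d b a" using um unfolding is_ultrametric_def by blast
lemma dtri: "a \<in> S \<Longrightarrow> b \<in> S \<Longrightarrow> c \<in> S \<Longrightarrow> d a c \<le> max (d a b) (d b c)"
  using um unfolding is_ultrametric_def by blast

lemma bs_S: "bs x \<subseteq> S" unfolding boundary_sub_def by blast

lemma S_E: "\<xi> \<in> S \<Longrightarrow> \<exists>g\<in>Br. \<xi> = E g" using ends_eq by blast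
lemma E_S: "g \<in> Br \<Longrightarrow> E g \<in> S" using ends_eq by blast

lemma bs_r: "bs r = S"
proof
  show "S \<subseteq> bs r"
  proof
    fix \<xi> assume "\<xi> \<in> S"
    then obtain g where g: "g \<in> Br" "\<xi> = E g" using S_E by blast
    then show "\<xi> \<in> bs r" using bsub[OF g(1)] Br_0[OF g(1)] by (metis rangeI)
  qed
qed (rule bs_S)

lemma ball_le: assumes "\<xi> \<in> S" "a \<in> closed_ball_in S d \<xi> \<rho>" "b \<in> closed_ball_in S d \<xi> \<rho>"
  shows "d a b \<le> \<rho>"
proof -
  have "a \<in> S" "b \<in> S" "d \<xi> a \<le> \<rho>" "d \<xi> b \<le> \<rho>" using assms unfolding closed_ball_in_def by auto
  then show ?thesis using dtri[of a \<xi> b] dsym[of a \<xi>] assms(1) by auto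
qed

lemma ball_is_bs: "\<xi> \<in> S \<Longrightarrow> \<rho> > 0 \<Longrightarrow> \<exists>y\<in>V. closed_ball_in S d \<xi> \<rho> = bs y"
  using balls by blast

lemma bs_is_ball: "x \<in> V \<Longrightarrow> \<exists>\<zeta> \<rho>. \<zeta> \<in> S \<and> \<rho> > 0 \<and> bs x = closed_ball_in S d \<zeta> \<rho>"
proof -
  assume "x \<in> V"
  then have "bs x \<in> {boundary_sub V r p x | x. x \<in> V}" by blast
  then show ?thesis using balls by (smt (verit) mem_Collect_eq)
qed

lemma bound: "\<exists>M. \<forall>a\<in>S. \<forall>b\<in>S. d a b \<le> M"
proof -
  obtain \<zeta> \<rho> where z: "\<zeta> \<in> S" "bs r = closed_ball_in S d \<zeta> \<rho>" using bs_is_ball rV by blast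
  then show ?thesis using ball_le[OF z(1)] bs_r by metis
qed

lemma bdd: "A \<subseteq> S \<Longrightarrow> bdd_above {d a b | a b. a \<in> A \<and> b \<in> A}"
proof -
  assume A: "A \<subseteq> S"
  obtain M where "\<forall>a\<in>S. \<forall>b\<in>S. d a b \<le> M" using bound by blast
  then show ?thesis unfolding bdd_above_def using A by blast
qed

lemma diam_upper: assumes A: "A \<subseteq> S" and "a \<in> A" "b \<in> A" shows "d a b \<le> diam A"
  unfolding diam_def by (rule cSup_upper[OF _ bdd[OF A]]) (use assms in blast)

lemma diam_le: "A \<noteq> {} \<Longrightarrow> (\<And>a b. a \<in> A \<Longrightarrow> b \<in> A \<Longrightarrow> d a b \<le> c) \<Longrightarrow> diam A \<le> c"
  unfolding diam_def by (rule cSup_least) blast+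

lemma ball_eq: assumes x: "x \<in> V" and xi: "\<xi> \<in> bs x"
  shows "bs x = closed_ball_in S d \<xi> (diam (bs x))"
proof -
  obtain \<zeta> \<rho> where z: "\<zeta> \<in> S" "bs x = closed_ball_in S d \<zeta> \<rho>" using bs_is_ball x by blast
  have dl: "diam (bs x) \<le> \<rho>" using diam_le[of "bs x" \<rho>] xi ball_le[OF z(1)] z(2) by blast
  show ?thesis
  proof
    show "bs x \<subseteq> closed_ball_in S d \<xi> (diam (bs x))"
      using diam_upper[OF bs_S xi] bs_S unfolding closed_ball_in_def by blast
  next
    show "closed_ball_in S d \<xi> (diam (bs x)) \<subseteq> bs x"
    proof
      fix \<eta> assume "\<eta> \<in> closed_ball_in S d \<xi> (diam (bs x))"
      then have e: "\<eta> \<in> S" "d \<xi> \<eta> \<le> diam (bs x)" unfolding closed_ball_in_def by auto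
      have xs: "\<xi> \<in> S" "d \<zeta> \<xi> \<le> \<rho>" using xi z unfolding closed_ball_in_def by auto
      have "d \<zeta> \<eta> \<le> \<rho>" using dtri[OF z(1) xs(1) e(1)] xs e dl by linarith
      then show "\<eta> \<in> bs x" using z e unfolding closed_ball_in_def by blast
    qed
  qed
qed

lemma bs_two: assumes x: "x \<in> V" shows "\<exists>\<xi> \<eta>. \<xi> \<in> bs x \<and> \<eta> \<in> bs x \<and> \<xi> \<noteq> \<eta>"
proof -
  obtain z1 z2 where z: "z1 \<in> children V r p x" "z2 \<in> children V r p x" "z1 \<noteq> z2"
    using two_children x by blast
  have zv: "z1 \<in> V" "z2 \<in> V" "z1 \<noteq> r" "z2 \<noteq> r" "p z1 = x" "p z2 = x"
    using z unfolding children_def by auto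
  obtain g1 m1 where g1: "g1 \<in> Br" "g1 m1 = z1" using branch_through zv by blast
  obtain g2 m2 where g2: "g2 \<in> Br" "g2 m2 = z2" using branch_through zv by blast
  have p1: "m1 = Suc (m1 - 1)" "g1 (m1 - 1) = x" using Br_parent[OF g1(1) g1(2) zv(3)] zv by auto
  have p2: "m2 = Suc (m2 - 1)" "g2 (m2 - 1) = x" using Br_parent[OF g2(1) g2(2) zv(4)] zv by auto
  have i1: "E g1 \<in> bs x" using bsub[OF g1(1)] p1 by (metis rangeI)
  have i2: "E g2 \<in> bs x" using bsub[OF g2(1)] p2 by (metis rangeI)
  have "E g1 \<noteq> E g2"
  proof
    assume "E g1 = E g2"
    then have gg: "g1 = g2" using E_inj g1 g2 by blast
    then have "m1 - 1 = m2 - 1" using p1 p2 Br_inj[OF g2(1)] unfolding inj_def by metis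
    then have "m1 = m2" using p1 p2 by linarith
    then show False using g1 g2 gg z by simp
  qed
  then show ?thesis using i1 i2 by blast
qed

lemma diam_pos: "x \<in> V \<Longrightarrow> diam (bs x) > 0"
proof -
  assume x: "x \<in> V"
  obtain \<xi> \<eta> where e: "\<xi> \<in> bs x" "\<eta> \<in> bs x" "\<xi> \<noteq> \<eta>" using bs_two x by blast
  have "d \<xi> \<eta> > 0" using d0 dge e bs_S by (metis less_eq_real_def subsetD)
  then show ?thesis using diam_upper[OF bs_S e(1,2)] by linarith
qed

lemma bs_parent: assumes x: "x \<in> V" "x \<noteq> r"
  shows "bs x \<subseteq> bs (p x)" "\<exists>\<zeta>. \<zeta> \<in> bs (p x) \<and> \<zeta> \<notin> bs x"
proof -
  show "bs x \<subseteq> bs (p x)"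
  proof
    fix \<xi> assume xi: "\<xi> \<in> bs x"
    then obtain g where g: "g \<in> Br" "\<xi> = E g" using S_E bs_S by blast
    then obtain m where "g m = x" using bsub[OF g(1)] xi by (metis rangeE)
    then have "g (m - 1) = p x" using Br_parent[OF g(1)] x by blast
    then show "\<xi> \<in> bs (p x)" using bsub[OF g(1)] g(2) by (metis rangeI)
  qed
next
  have y: "p x \<in> V" using pV x by blast
  obtain z1 z2 where z: "z1 \<in> children V r p (p x)" "z2 \<in> children V r p (p x)" "z1 \<noteq> z2"
    using two_children y by blast
  then obtain z where zz: "z \<in> children V r p (p x)" "z \<noteq> x" by blast
  have zv: "z \<in> V" "z \<noteq> r" "p z = p x" using zz unfolding children_def by auto
  obtain g m where g: "g \<in> Br" "g m = z" using branch_through zv by blast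
  have pz: "m = Suc (m - 1)" "g (m - 1) = p x" using Br_parent[OF g zv(2)] zv by auto
  have "x \<notin> range g"
  proof
    assume "x \<in> range g"
    then obtain m' where m': "g m' = x" by blast
    have "g (m' - 1) = p x" "m' = Suc (m' - 1)" using Br_parent[OF g(1) m' x(2)] by auto
    then have "m' - 1 = m - 1" using pz Br_inj[OF g(1)] unfolding inj_def by metis
    then have "m' = m" using pz \<open>m' = Suc (m' - 1)\<close> by linarith
    then show False using m' g zz by simp
  qed
  then show "\<exists>\<zeta>. \<zeta> \<in> bs (p x) \<and> \<zeta> \<notin> bs x" using bsub[OF g(1)] pz by (metis rangeI)
qed

lemma diam_strict: assumes x: "x \<in> V" "x \<noteq> r" shows "diam (bs x) < diam (bs (p x))"
proof -
  have y: "p x \<in> V" using pV x by blast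
  have sub: "bs x \<subseteq> bs (p x)" using bs_parent[OF x] by blast
  obtain \<zeta> where zz: "\<zeta> \<in> bs (p x)" "\<zeta> \<notin> bs x" using bs_parent[OF x] by blast
  obtain \<xi> where xi: "\<xi> \<in> bs x" using bs_two x by blast
  have le: "diam (bs x) \<le> diam (bs (p x))"
    using diam_le[of "bs x"] xi diam_upper[OF bs_S] sub by blast
  have "\<not> diam (bs (p x)) \<le> diam (bs x)"
  proof
    assume a: "diam (bs (p x)) \<le> diam (bs x)"
    have "d \<xi> \<zeta> \<le> diam (bs (p x))" using diam_upper[OF bs_S] xi sub zz by blast
    then have "\<zeta> \<in> closed_ball_in S d \<xi> (diam (bs x))"
      using a zz bs_S unfolding closed_ball_in_def by auto
    then show False using ball_eq[OF x(1) xi] zz by blast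
  qed
  then show ?thesis by linarith
qed

lemma anc_sub: assumes g: "g \<in> Br" and k: "k \<le> m" shows "bs (g m) \<subseteq> bs (g k)"
proof
  fix \<zeta> assume z: "\<zeta> \<in> bs (g m)"
  then obtain b where b: "b \<in> Br" "\<zeta> = E b" using S_E bs_S by blast
  then obtain j where j: "b j = g m" using bsub z by (metis rangeE)
  have "j = m" using Br_eq_idx[OF b(1) g j] .
  then have "b k = g k" using Br_anc[OF b(1) g j] k by simp
  then show "\<zeta> \<in> bs (g k)" using bsub[OF b(1)] b(2) by (metis rangeI)
qed

lemma dist_formula: assumes a: "\<xi> \<in> S" "\<eta> \<in> S" "\<xi> \<noteq> \<eta>"
  shows "d \<xi> \<eta> = diam (bs (confluent r \<xi> \<eta>))"
proof -
  obtain g h where gh: "g \<in> Br" "h \<in> Br" "\<xi> = E g" "\<eta> = E h" using S_E a by metis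
  have ne: "g \<noteq> h" using gh a by blast
  obtain m where m: "confluent r (E g) (E h) = g m" "g m = h m" "\<forall>k. g k = h k \<longrightarrow> k \<le> m"
    using confl[OF gh(1,2) ne] by blast
  have xi: "\<xi> \<in> bs (g m)" using bsub[OF gh(1)] gh by blast
  have eta: "\<eta> \<in> bs (g m)" using bsub[OF gh(2)] gh m by (metis rangeI)
  have le1: "d \<xi> \<eta> \<le> diam (bs (g m))" using diam_upper[OF bs_S xi eta] .
  define \<rho> where "\<rho> = d \<xi> \<eta>"
  have rp: "\<rho> > 0" unfolding \<rho>_def using d0 dge a by (metis less_eq_real_def)
  obtain y where y: "y \<in> V" "closed_ball_in S d \<xi> \<rho> = bs y" using ball_is_bs[OF a(1) rp] by blast
  have "d \<xi> \<xi> = 0" using d0 a by blast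
  then have "\<xi> \<in> closed_ball_in S d \<xi> \<rho>" using a rp unfolding closed_ball_in_def by auto
  then obtain k where k: "g k = y" using bsub[OF gh(1)] gh y by (metis rangeE)
  have "\<eta> \<in> closed_ball_in S d \<xi> \<rho>" using a unfolding closed_ball_in_def \<rho>_def by auto
  then obtain k' where k': "h k' = y" using bsub[OF gh(2)] gh y by (metis rangeE)
  have "k = k'" using Br_eq_idx[OF gh(1,2)] k k' by metis
  then have km: "k \<le> m" using m k k' by metis
  have "bs (g m) \<subseteq> bs y" using anc_sub[OF gh(1) km] k by simp
  then have "diam (bs (g m)) \<le> \<rho>"
    using diam_le[of "bs (g m)" \<rho>] xi ball_le[OF a(1)] y(2) by blast
  then show ?thesis using le1 m gh \<rho>_def by simp
qed

lemma Br_lim: assumes g: "g \<in> Br" shows "(\<lambda>n. diam (bs (g n))) \<longlonglongrightarrow> 0"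
proof (rule LIMSEQ_I)
  fix e :: real assume e: "e > 0"
  have gS: "E g \<in> S" using E_S g .
  obtain y where y: "y \<in> V" "closed_ball_in S d (E g) (e/2) = bs y"
    using ball_is_bs[OF gS] e by (metis half_gt_zero)
  have "d (E g) (E g) = 0" using d0 gS by blast
  then have "E g \<in> closed_ball_in S d (E g) (e/2)" using gS e unfolding closed_ball_in_def by auto
  then obtain m where m: "g m = y" using bsub[OF g] y by (metis rangeE)
  have "norm (diam (bs (g n)) - 0) < e" if n: "n \<ge> m" for n
  proof -
    have sub: "bs (g n) \<subseteq> bs y" using anc_sub[OF g n] m by simp
    obtain \<xi> where "\<xi> \<in> bs (g n)" using bs_two Br_V[OF g] by blast
    then have "diam (bs (g n)) \<le> e/2"
      using diam_le[of "bs (g n)" "e/2"] ball_le[OF gS] y(2) sub by blast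
    moreover have "diam (bs (g n)) > 0" using diam_pos Br_V[OF g] by blast
    ultimately show ?thesis using e by simp
  qed
  then show "\<exists>no. \<forall>n\<ge>no. norm (diam (bs (g n)) - 0) < e" by blast
qed

lemma ray_lim: assumes f: "ray V r p f" shows "(\<lambda>n. diam (bs (f n))) \<longlonglongrightarrow> 0"
proof -
  obtain g a D where g: "g \<in> Br" "\<forall>j. f (a+j) = g (D+j)" using ray_to_Br[OF f] by blast
  have "(\<lambda>n. diam (bs (g (n + D)))) \<longlonglongrightarrow> 0"
    using LIMSEQ_ignore_initial_segment[OF Br_lim[OF g(1)]] by simp
  then have "(\<lambda>n. diam (bs (f (n + a)))) \<longlonglongrightarrow> 0" using g(2) by (simp add: add.commute)
  then show ?thesis by (rule LIMSEQ_offset)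
qed

end

theorem lemma2p2:
  fixes V :: "'v set" and r :: 'v and p :: "'v \<Rightarrow> 'v"
    and d :: "(nat \<Rightarrow> 'v) set \<Rightarrow> (nat \<Rightarrow> 'v) set \<Rightarrow> real"
  assumes tree: "rooted_tree V r p"
    and lf: "locally_finite V r p"
    and inf: "infinite V"
    and deg: "\<forall>x\<in>V. fdeg V r p x \<ge> 2"
    and um: "is_ultrametric (ends V r p) d"
    and balls: "{closed_ball_in (ends V r p) d \<xi> \<rho> | \<xi> \<rho>. \<xi> \<in> ends V r p \<and> \<rho> > 0}
                = {boundary_sub V r p x | x. x \<in> V}"
  shows "\<exists>\<phi>. ultrametric_element V r p \<phi> \<and>
           (\<forall>\<xi>\<in>ends V r p. \<forall>\<eta>\<in>ends V r p. d \<xi> \<eta> = d_phi r \<phi> \<xi> \<eta>)"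
proof -
  interpret tm V r p d using tree deg um balls by unfold_locales
  define \<phi> where "\<phi> x = diam (bs x)" for x
  have "ultrametric_element V r p \<phi>"
    unfolding ultrametric_element_def \<phi>_def using diam_pos diam_strict ray_lim by blast
  moreover have "\<forall>\<xi>\<in>ends V r p. \<forall>\<eta>\<in>ends V r p. d \<xi> \<eta> = d_phi r \<phi> \<xi> \<eta>"
    unfolding d_phi_def \<phi>_def using dist_formula d0 by auto
  ultimately show ?thesis by blast
qed

end
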